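(* Let $F\in\mathbb C[x,y,s,t]$ be a polynomial of degree $d$ that is not Cartesian. Then there are at most $d^2$ points $q=(s_q,t_q)\in\mathbb C^2$ for which $C_q=\mathbb C^2$, where $C_q=\{(x,y)\in\mathbb C^2: F(x,y,s_q,t_q)=0\}$.
   Context: $F\in\mathbb C[x,y,s,t]$ is Cartesian if there exist $G\in\mathbb C[x,y]\setminus\mathbb C$, $K\in\mathbb C[s,t]\setminus\mathbb C$ and $H,L\in\mathbb C[x,y,s,t]$ with $F=G(x,y)H(x,y,s,t)+K(s,t)L(x,y,s,t)$. *)

theory Defs
  imports Complex_Main "HOL-Library.Poly_Mapping"
begin

datatype vr = X | Y | S | T

text \<open>Polynomials in C[x,y,s,t]: finitely supported maps from monomials
  (exponent vectors vr =>0 nat) to complex coefficients; multiplication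
  is the convolution product of Poly_Mapping.\<close>
type_synonym mpoly4 = "(vr \<Rightarrow>\<^sub>0 nat) \<Rightarrow>\<^sub>0 complex"

definition vars :: "mpoly4 \<Rightarrow> vr set" where
  "vars p = {v. \<exists>m\<in>Poly_Mapping.keys p. v \<in> Poly_Mapping.keys m}"

definition mon_deg :: "(vr \<Rightarrow>\<^sub>0 nat) \<Rightarrow> nat" where
  "mon_deg m = (\<Sum>v\<in>Poly_Mapping.keys m. Poly_Mapping.lookup m v)"

text \<open>Total degree (the zero polynomial gets degree 0).\<close>
definition total_degree :: "mpoly4 \<Rightarrow> nat" where
  "total_degree p = Max (insert 0 (mon_deg ` Poly_Mapping.keys p))"

definition eval :: "mpoly4 \<Rightarrow> (vr \<Rightarrow> complex) \<Rightarrow> complex" where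
  "eval p a = (\<Sum>m\<in>Poly_Mapping.keys p. Poly_Mapping.lookup p m * (\<Prod>v\<in>Poly_Mapping.keys m. a v ^ Poly_Mapping.lookup m v))"

definition pt :: "complex \<Rightarrow> complex \<Rightarrow> complex \<Rightarrow> complex \<Rightarrow> vr \<Rightarrow> complex" where
  "pt x y s t v = (case v of X \<Rightarrow> x | Y \<Rightarrow> y | S \<Rightarrow> s | T \<Rightarrow> t)"

definition cartesian :: "mpoly4 \<Rightarrow> bool" where
  "cartesian F \<longleftrightarrow> (\<exists>G K H L. vars G \<subseteq> {X, Y} \<and> vars G \<noteq> {} \<and>
      vars K \<subseteq> {S, T} \<and> vars K \<noteq> {} \<and> F = G * H + K * L)"

definition fiber_curve :: "mpoly4 \<Rightarrow> complex \<times> complex \<Rightarrow> (complex \<times> complex) set" where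
  "fiber_curve F q = {(x, y). eval F (pt x y (fst q) (snd q)) = 0}"

end

theory Submission
  imports Defs "HOL-Computational_Algebra.Polynomial_Factorial" "HOL-Computational_Algebra.Field_as_Ring"
begin

section \<open>Ring homomorphisms through polynomial evaluation\<close>

definition is_rhom :: "('a::comm_ring_1 \<Rightarrow> 'b::comm_ring_1) \<Rightarrow> bool" where
  "is_rhom h \<longleftrightarrow> h 0 = 0 \<and> h 1 = 1 \<and> (\<forall>a b. h (a + b) = h a + h b) \<and> (\<forall>a b. h (a * b) = h a * h b)"

lemma map_poly_add_hom:
  assumes "is_rhom h"
  shows "map_poly h (p + q) = map_poly h p + map_poly h q"
  using assms by (intro poly_eqI) (simp add: coeff_map_poly is_rhom_def)

lemma map_poly_mult_hom:
  assumes "is_rhom h"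
  shows "map_poly h (p * q) = map_poly h p * map_poly h q"
proof (induction p rule: pCons_induct)
  case 0
  then show ?case using assms by (simp add: is_rhom_def map_poly_def)
next
  case (pCons a p)
  have h0: "h 0 = 0" using assms by (simp add: is_rhom_def)
  have "map_poly h (pCons a p * q) = map_poly h (smult a q + pCons 0 (p * q))"
    by simp
  also have "\<dots> = smult (h a) (map_poly h q) + pCons 0 (map_poly h p * map_poly h q)"
    using assms pCons.IH h0 by (simp add: map_poly_add_hom map_poly_smult map_poly_pCons is_rhom_def)
  also have "\<dots> = map_poly h (pCons a p) * map_poly h q"
    using h0 by (simp add: map_poly_pCons)
  finally show ?case .
qed

lemma map_poly_one_hom: "is_rhom h \<Longrightarrow> map_poly h 1 = 1"
  by (simp add: is_rhom_def one_pCons map_poly_pCons)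

definition heval :: "('a::comm_ring_1 \<Rightarrow> 'b::comm_ring_1) \<Rightarrow> 'b \<Rightarrow> 'a poly \<Rightarrow> 'b" where
  "heval h x p = poly (map_poly h p) x"

lemma heval_rhom: "is_rhom h \<Longrightarrow> is_rhom (heval h x)"
  unfolding is_rhom_def[of "heval h x"] heval_def
  by (auto simp: map_poly_add_hom map_poly_mult_hom map_poly_one_hom)

lemma heval_monom: "is_rhom h \<Longrightarrow> heval h x (monom c n) = h c * x ^ n"
  by (simp add: heval_def map_poly_monom is_rhom_def poly_monom)

lemma heval_const: "is_rhom h \<Longrightarrow> heval h x [:c:] = h c"
  by (simp add: heval_def is_rhom_def map_poly_pCons)

lemma rhom_sum: "is_rhom h \<Longrightarrow> h (sum f A) = (\<Sum>a\<in>A. h (f a))"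
  by (induction A rule: infinite_finite_induct) (auto simp: is_rhom_def)

lemma rhom_prod: "is_rhom h \<Longrightarrow> h (prod f A) = (\<Prod>a\<in>A. h (f a))"
  by (induction A rule: infinite_finite_induct) (auto simp: is_rhom_def)

lemma rhom_diff: "is_rhom h \<Longrightarrow> h (a - b) = h a - h b"
proof -
  assume h: "is_rhom h"
  have "h (a - b) + h b = h a" using h by (metis diff_add_cancel is_rhom_def)
  thus ?thesis by (simp add: eq_diff_eq)
qed

lemma rhom_power: "is_rhom h \<Longrightarrow> h (a ^ n) = h a ^ n"
  by (induction n) (auto simp: is_rhom_def)

lemma rhom_id: "is_rhom (\<lambda>x. x)" by (simp add: is_rhom_def)

lemma map_poly_zero_iff: "h 0 = 0 \<Longrightarrow> map_poly h p = 0 \<longleftrightarrow> (\<forall>k. h (coeff p k) = 0)"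
  by (auto simp: poly_eq_iff coeff_map_poly)


type_synonym bp = "complex poly poly"

lemma cop_dvd: "coprime (g::bp) f \<Longrightarrow> g dvd a * f \<Longrightarrow> g dvd a"
  by (simp add: coprime_dvd_mult_left_iff)

definition tdeg :: "bp \<Rightarrow> nat" where
  "tdeg p = Max (insert 0 {i + j | i j. coeff (coeff p j) i \<noteq> 0})"

lemma finite_supp2: "finite {(i, j). coeff (coeff (p::bp) j) i \<noteq> 0}"
proof -
  let ?B = "\<Sum>j\<le>degree p. degree (coeff p j)"
  have *: "i \<le> ?B \<and> j \<le> degree p" if h: "coeff (coeff p j) i \<noteq> 0" for i j
  proof -
    have c: "coeff p j \<noteq> 0" using h by auto
    then have j: "j \<le> degree p" using le_degree by blast
    have "i \<le> degree (coeff p j)" using h le_degree by blast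
    also have "\<dots> \<le> ?B" using j by (intro member_le_sum) auto
    finally show ?thesis using j by auto
  qed
  have "{(i, j). coeff (coeff p j) i \<noteq> 0} \<subseteq> {..?B} \<times> {..degree p}"
    using * by auto
  thus ?thesis by (rule finite_subset) auto
qed

lemma finite_tdeg_set: "finite {i + j | i j. coeff (coeff (p::bp) j) i \<noteq> 0}"
proof -
  have "{i + j | i j. coeff (coeff p j) i \<noteq> 0} = (\<lambda>(i,j). i + j) ` {(i, j). coeff (coeff (p::bp) j) i \<noteq> 0}"
    by auto
  thus ?thesis using finite_supp2 by simp
qed

lemma tdeg_le_iff: "tdeg p \<le> n \<longleftrightarrow> (\<forall>i j. coeff (coeff p j) i \<noteq> 0 \<longrightarrow> i + j \<le> n)"
  unfolding tdeg_def using finite_tdeg_set[of p] by (auto simp: Max_le_iff)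

lemma tdeg_ge: "coeff (coeff p j) i \<noteq> 0 \<Longrightarrow> i + j \<le> tdeg p"
  using tdeg_le_iff[of p "tdeg p"] by blast

lemma tdeg_leI: "(\<And>i j. coeff (coeff p j) i \<noteq> 0 \<Longrightarrow> i + j \<le> n) \<Longrightarrow> tdeg p \<le> n"
  using tdeg_le_iff by blast

lemma tdeg_attained:
  assumes "p \<noteq> 0"
  shows "\<exists>i j. coeff (coeff p j) i \<noteq> 0 \<and> i + j = tdeg p"
proof -
  have "\<exists>j. coeff p j \<noteq> 0" using assms by (simp add: poly_eq_iff)
  then obtain j where j: "coeff p j \<noteq> 0" by blast
  have "\<exists>i. coeff (coeff p j) i \<noteq> 0" using j by (simp add: poly_eq_iff)
  then obtain i where i: "coeff (coeff p j) i \<noteq> 0" by blast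
  let ?S = "{i + j | i j. coeff (coeff p j) i \<noteq> 0}"
  have M: "tdeg p \<in> insert 0 ?S" unfolding tdeg_def using finite_tdeg_set[of p] by (intro Max_in) auto
  have ge: "i + j \<le> tdeg p" using i by (rule tdeg_ge)
  show ?thesis
  proof (cases "tdeg p \<in> ?S")
    case True
    then obtain i' j' where "tdeg p = i' + j'" "coeff (coeff p j') i' \<noteq> 0" by blast
    thus ?thesis by metis
  next
    case False
    with M have "tdeg p = 0" by blast
    with ge have "i + j = tdeg p" by simp
    thus ?thesis using i by blast
  qed
qed

lemma tdeg_0[simp]: "tdeg 0 = 0"
  by (simp add: tdeg_def)

lemma tdeg_add: "tdeg (p + q) \<le> max (tdeg p) (tdeg q)"
proof (rule tdeg_leI)
  fix i j assume "coeff (coeff (p + q) j) i \<noteq> 0"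
  hence "coeff (coeff p j) i \<noteq> 0 \<or> coeff (coeff q j) i \<noteq> 0" by auto
  thus "i + j \<le> max (tdeg p) (tdeg q)" using tdeg_ge by fastforce
qed

lemma tdeg_uminus: "tdeg (- p) = tdeg p"
  unfolding tdeg_def by simp

lemma tdeg_diff: "tdeg (p - q) \<le> max (tdeg p) (tdeg q)"
  using tdeg_add[of p "-q"] by (simp add: tdeg_uminus)

lemma tdeg_smult: "tdeg (smult [:c:] p) \<le> tdeg p"
  by (rule tdeg_leI) (auto intro: tdeg_ge)

lemma coeff2_mult:
  "coeff (coeff (p * q) J) I = (\<Sum>j\<le>J. \<Sum>i\<le>I. coeff (coeff p j) i * coeff (coeff q (J - j)) (I - i))"
  by (simp add: coeff_mult coeff_sum)

lemma tdeg_mult_le: "tdeg (p * q) \<le> tdeg p + tdeg q"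
proof (rule tdeg_leI)
  fix I J assume "coeff (coeff (p * q) J) I \<noteq> 0"
  then obtain j i where ji: "j \<le> J" "i \<le> I"
    "coeff (coeff p j) i * coeff (coeff q (J - j)) (I - i) \<noteq> 0"
    unfolding coeff2_mult by (metis (no_types, lifting) atMost_iff sum.neutral)
  have "i + j \<le> tdeg p" by (rule tdeg_ge) (use ji(3) in auto)
  moreover have "(I - i) + (J - j) \<le> tdeg q" by (rule tdeg_ge) (use ji(3) in auto)
  ultimately show "I + J \<le> tdeg p + tdeg q" using ji by linarith
qed

lemma tdeg_sum_le: "(\<And>a. a \<in> A \<Longrightarrow> tdeg (f a) \<le> n) \<Longrightarrow> tdeg (sum f A) \<le> n"
proof (induction A rule: infinite_finite_induct)
  case (insert x F)
  have "tdeg (f x) \<le> n" "tdeg (sum f F) \<le> n" using insert by auto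
  then show ?case using tdeg_add[of "f x" "sum f F"] insert(1,2) by simp
qed auto

lemma tdeg_prod_le: "(\<And>a. a \<in> A \<Longrightarrow> tdeg (f a) \<le> 1) \<Longrightarrow> tdeg (prod f A) \<le> card A"
proof (induction A rule: infinite_finite_induct)
  case (infinite A)
  have "tdeg 1 \<le> 0" by (rule tdeg_leI) (auto simp: of_bool_def split: if_splits)
  then show ?case using infinite by simp
next
  case empty
  have "tdeg 1 \<le> 0" by (rule tdeg_leI) (auto simp: of_bool_def split: if_splits)
  then show ?case by simp
next
  case (insert x F)
  have a: "tdeg (f x) \<le> 1" using insert by auto
  have b: "tdeg (prod f F) \<le> card F" using insert by auto
  show ?case using tdeg_mult_le[of "f x" "prod f F"] insert(1,2) a b by simp
qed

definition topj :: "bp \<Rightarrow> nat" where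
  "topj p = Max {j. j \<le> tdeg p \<and> coeff (coeff p j) (tdeg p - j) \<noteq> 0}"

lemma topj_props:
  assumes "p \<noteq> 0"
  shows "topj p \<le> tdeg p" "coeff (coeff p (topj p)) (tdeg p - topj p) \<noteq> 0"
    "\<And>i j. coeff (coeff p j) i \<noteq> 0 \<Longrightarrow> i + j = tdeg p \<Longrightarrow> j \<le> topj p"
proof -
  let ?S = "{j. j \<le> tdeg p \<and> coeff (coeff p j) (tdeg p - j) \<noteq> 0}"
  have fin: "finite ?S" by auto
  obtain i j where ij: "coeff (coeff p j) i \<noteq> 0" "i + j = tdeg p" using tdeg_attained[OF assms] by blast
  have "i = tdeg p - j" "j \<le> tdeg p" using ij(2) by auto
  hence "j \<in> ?S" using ij(1) by auto
  hence ne: "?S \<noteq> {}" by auto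
  have "topj p \<in> ?S" unfolding topj_def using fin ne by (rule Max_in)
  thus "topj p \<le> tdeg p" "coeff (coeff p (topj p)) (tdeg p - topj p) \<noteq> 0" by auto
  fix i j assume "coeff (coeff p j) i \<noteq> 0" "i + j = tdeg p"
  hence "i = tdeg p - j" "j \<le> tdeg p" by auto
  hence "j \<in> ?S" using \<open>coeff (coeff p j) i \<noteq> 0\<close> by auto
  thus "j \<le> topj p" unfolding topj_def using fin by (simp add: Max_ge)
qed

lemma tdeg_mult_ge:
  assumes p: "p \<noteq> 0" and q: "q \<noteq> 0"
  shows "tdeg p + tdeg q \<le> tdeg (p * q)"
proof -
  define jp where "jp = topj p"
  define jq where "jq = topj q"
  define ip where "ip = tdeg p - jp"
  define iq where "iq = tdeg q - jq"
  note P = topj_props[OF p, folded jp_def]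
  note Q = topj_props[OF q, folded jq_def]
  let ?T = "\<lambda>i j. coeff (coeff p j) i * coeff (coeff q (jp + jq - j)) (ip + iq - i)"
  have zero: "?T i j = 0" if "j \<le> jp + jq" "i \<le> ip + iq" "(i, j) \<noteq> (ip, jp)" for i j
  proof (rule ccontr)
    assume "?T i j \<noteq> 0"
    hence c1: "coeff (coeff p j) i \<noteq> 0" and c2: "coeff (coeff q (jp + jq - j)) (ip + iq - i) \<noteq> 0"
      by auto
    have a1: "i + j \<le> tdeg p" using tdeg_ge[OF c1] .
    have a2: "(ip + iq - i) + (jp + jq - j) \<le> tdeg q" using tdeg_ge[OF c2] .
    have e1: "i + j = tdeg p" using a1 a2 that P(1) Q(1) unfolding ip_def iq_def by linarith
    have e2: "(ip + iq - i) + (jp + jq - j) = tdeg q"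
      using a1 a2 that P(1) Q(1) unfolding ip_def iq_def by linarith
    have "j \<le> jp" using P(3)[OF c1 e1] .
    moreover have "jp + jq - j \<le> jq" using Q(3)[OF c2 e2] .
    ultimately have "j = jp" using that by linarith
    moreover have "i = ip" using e1 \<open>j = jp\<close> unfolding ip_def by simp
    ultimately show False using that by simp
  qed
  have "coeff (coeff (p * q) (jp + jq)) (ip + iq) = ?T ip jp"
  proof -
    have "coeff (coeff (p * q) (jp + jq)) (ip + iq) = (\<Sum>j\<le>jp + jq. \<Sum>i\<le>ip + iq. ?T i j)"
      by (rule coeff2_mult)
    also have "\<dots> = (\<Sum>j\<le>jp + jq. if j = jp then ?T ip jp else 0)"
    proof (rule sum.cong[OF refl])
      fix j assume j: "j \<in> {..jp + jq}"
      show "(\<Sum>i\<le>ip + iq. ?T i j) = (if j = jp then ?T ip jp else 0)"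
      proof (cases "j = jp")
        case True
        have "(\<Sum>i\<le>ip + iq. ?T i j) = (\<Sum>i\<le>ip + iq. if i = ip then ?T ip jp else 0)"
          apply (rule sum.cong[OF refl])
          subgoal for i using zero[of j i] j True by (cases "i = ip") auto
          done
        also have "\<dots> = ?T ip jp" by simp
        finally show ?thesis using True by simp
      next
        case False
        then show ?thesis using zero j by (auto intro: sum.neutral)
      qed
    qed
    also have "\<dots> = ?T ip jp" by simp
    finally show ?thesis .
  qed
  moreover have "?T ip jp \<noteq> 0" using P(2) Q(2) unfolding ip_def iq_def by simp
  ultimately have "coeff (coeff (p * q) (jp + jq)) (ip + iq) \<noteq> 0" by simp
  hence "ip + iq + (jp + jq) \<le> tdeg (p * q)" by (rule tdeg_ge)
  thus ?thesis using P(1) Q(1) unfolding ip_def iq_def by linarith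
qed

lemma tdeg_mult: "p \<noteq> 0 \<Longrightarrow> q \<noteq> 0 \<Longrightarrow> tdeg (p * q) = tdeg p + tdeg q"
  by (intro antisym tdeg_mult_le tdeg_mult_ge)


definition scl :: "complex \<Rightarrow> bp \<Rightarrow> bp" where
  "scl c p = smult [:c:] p"

lemma coeff2_scl[simp]: "coeff (coeff (scl c p) j) i = c * coeff (coeff p j) i"
  by (simp add: scl_def)

lemma const_add_c: "[:a + b:] = [:a:] + [:b:]" by simp
lemma const_mult_c: "[:a * b:] = [:a:] * [:b:]" by (simp add: mult.commute)

interpretation VS: vector_space scl
proof unfold_locales
  fix a b :: complex and x y :: bp
  show "scl a (x + y) = scl a x + scl a y" by (simp add: scl_def smult_add_right)
  show "scl (a + b) x = scl a x + scl b x" by (simp add: scl_def const_add_c smult_add_left del: add_pCons)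
  show "scl a (scl b x) = scl (a * b) x" by (simp add: scl_def const_mult_c del: mult_pCons_left mult_pCons_right)
  show "scl 1 x = x" by (simp add: scl_def flip: one_pCons)
qed

lemma scl_mult_right: "scl c (h * p) = h * scl c p"
  by (simp add: scl_def mult_smult_right)

lemma tdeg_scl: "tdeg (scl c p) \<le> tdeg p"
  by (rule tdeg_leI) (auto intro: tdeg_ge)

definition mon :: "nat \<Rightarrow> nat \<Rightarrow> bp" where
  "mon i j = monom (monom 1 i) j"

lemma coeff2_mon: "coeff (coeff (mon i j) b) a = (if a = i \<and> b = j then 1 else 0)"
  by (auto simp: mon_def coeff_monom)

definition Idx :: "nat \<Rightarrow> (nat \<times> nat) set" where
  "Idx k = {x. fst x + snd x \<le> k}"

lemma finite_Idx[simp]: "finite (Idx k)"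
proof -
  have "Idx k \<subseteq> {..k} \<times> {..k}" by (auto simp: Idx_def)
  thus ?thesis by (rule finite_subset) auto
qed

definition monx :: "nat \<times> nat \<Rightarrow> bp" where
  "monx x = mon (fst x) (snd x)"

definition Mon :: "nat \<Rightarrow> bp set" where
  "Mon k = monx ` Idx k"

definition Bk :: "nat \<Rightarrow> bp set" where
  "Bk k = {p. tdeg p \<le> k}"

lemma coeff2_sum_mon:
  assumes "finite A"
  shows "coeff (coeff (\<Sum>x\<in>A. scl (c x) (monx x)) b) a = (if (a, b) \<in> A then c (a, b) else 0)"
proof -
  have "coeff (coeff (\<Sum>x\<in>A. scl (c x) (monx x)) b) a =
        (\<Sum>x\<in>A. c x * (if a = fst x \<and> b = snd x then 1 else 0))"
    by (simp add: coeff_sum monx_def coeff2_mon)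
  also have "\<dots> = (\<Sum>x\<in>A. if x = (a, b) then c (a, b) else 0)"
    by (intro sum.cong) auto
  also have "\<dots> = (if (a, b) \<in> A then c (a, b) else 0)"
    using assms by simp
  finally show ?thesis .
qed

lemma expand_mon:
  assumes "tdeg p \<le> k"
  shows "p = (\<Sum>x\<in>Idx k. scl (coeff (coeff p (snd x)) (fst x)) (monx x))"
proof (rule poly_eqI, rule poly_eqI)
  fix b a
  have "coeff (coeff (\<Sum>x\<in>Idx k. scl (coeff (coeff p (snd x)) (fst x)) (monx x)) b) a
      = (if (a, b) \<in> Idx k then coeff (coeff p b) a else 0)"
    by (subst coeff2_sum_mon) auto
  also have "\<dots> = coeff (coeff p b) a"
    using assms by (auto simp: Idx_def tdeg_le_iff)
  finally show "coeff (coeff p b) a = coeff (coeff (\<Sum>x\<in>Idx k. scl (coeff (coeff p (snd x)) (fst x)) (monx x)) b) a"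
    by simp
qed

lemma tdeg_monx: "tdeg (monx x) \<le> fst x + snd x"
  by (rule tdeg_leI) (auto simp: monx_def coeff2_mon split: if_splits)

lemma Mon_sub_Bk: "Mon k \<subseteq> Bk k"
  unfolding Mon_def Bk_def Idx_def using tdeg_monx by (auto intro: order_trans)

lemma subspace_Bk: "VS.subspace (Bk k)"
  unfolding VS.subspace_def Bk_def
  by (auto intro: order_trans[OF tdeg_add] order_trans[OF tdeg_scl])

lemma Bk_sub_span: "Bk k \<subseteq> VS.span (Mon k)"
proof
  fix p assume "p \<in> Bk k"
  hence p: "p = (\<Sum>x\<in>Idx k. scl (coeff (coeff p (snd x)) (fst x)) (monx x))"
    by (intro expand_mon) (simp add: Bk_def)
  have "(\<Sum>x\<in>Idx k. scl (coeff (coeff p (snd x)) (fst x)) (monx x)) \<in> VS.span (Mon k)"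
    by (intro VS.span_sum VS.span_scale VS.span_base) (auto simp: Mon_def)
  with p show "p \<in> VS.span (Mon k)" by simp
qed

lemma span_Mon: "VS.span (Mon k) = Bk k"
  using Bk_sub_span VS.span_minimal[OF Mon_sub_Bk subspace_Bk] by auto

lemma inj_monx: "inj monx"
proof (rule injI)
  fix x y assume "monx x = monx y"
  hence "coeff (coeff (monx x) (snd y)) (fst y) = coeff (coeff (monx y) (snd y)) (fst y)" by simp
  thus "x = y" by (auto simp: monx_def coeff2_mon split: if_splits simp: prod_eq_iff)
qed

lemma indep_hMon:
  assumes h: "h \<noteq> 0"
  shows "VS.independent ((\<lambda>x. h * monx x) ` Idx k)" (is "VS.independent ?T")
    and "card ((\<lambda>x. h * monx x) ` Idx k) = card (Idx k)"
proof -
  have inj: "inj_on (\<lambda>x. h * monx x) (Idx k)"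
    using inj_monx h by (auto simp: inj_on_def inj_def)
  show "card ?T = card (Idx k)" using inj by (rule card_image)
  show "VS.independent ?T"
  proof (rule VS.independent_if_scalars_zero)
    show "finite ?T" by simp
    fix u v assume sum0: "(\<Sum>x\<in>?T. scl (u x) x) = 0" and v: "v \<in> ?T"
    have "(\<Sum>x\<in>?T. scl (u x) x) = (\<Sum>x\<in>Idx k. scl (u (h * monx x)) (h * monx x))"
      using inj by (rule sum.reindex[unfolded comp_def])
    also have "\<dots> = h * (\<Sum>x\<in>Idx k. scl (u (h * monx x)) (monx x))"
      by (simp add: sum_distrib_left scl_mult_right)
    finally have "(\<Sum>x\<in>Idx k. scl (u (h * monx x)) (monx x)) = 0" using sum0 h by simp
    hence c: "\<And>a b. coeff (coeff (\<Sum>x\<in>Idx k. scl (u (h * monx x)) (monx x)) b) a = 0" by simp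
    from v obtain x where x: "x \<in> Idx k" "v = h * monx x" by auto
    have "coeff (coeff (\<Sum>x\<in>Idx k. scl (u (h * monx x)) (monx x)) (snd x)) (fst x) = u (h * monx x)"
      using x by (subst coeff2_sum_mon) auto
    thus "u v = 0" using c x by simp
  qed
qed

lemma card_Idx: "2 * card (Idx k) = (k + 1) * (k + 2)"
proof (induction k)
  case 0
  have "Idx 0 = {(0, 0)}" by (auto simp: Idx_def)
  then show ?case by simp
next
  case (Suc k)
  have eq: "Idx (Suc k) = Idx k \<union> (\<lambda>i. (i, Suc k - i)) ` {..Suc k}"
    by (auto simp: Idx_def image_iff intro!: bexI[where x = "fst _"])
  have disj: "Idx k \<inter> (\<lambda>i. (i, Suc k - i)) ` {..Suc k} = {}" by (auto simp: Idx_def)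
  have inj: "inj_on (\<lambda>i. (i, Suc k - i)) {..Suc k}" by (auto simp: inj_on_def)
  have "card (Idx (Suc k)) = card (Idx k) + (Suc k + 1)"
    unfolding eq using disj inj by (subst card_Un_disjoint) (auto simp: card_image)
  with Suc show ?case by simp
qed


definition ev :: "complex \<times> complex \<Rightarrow> bp \<Rightarrow> complex" where
  "ev z = heval (heval (\<lambda>c. c) (fst z)) (snd z)"

lemma rhom_ev: "is_rhom (ev z)"
  unfolding ev_def by (intro heval_rhom rhom_id)

lemma ev_const: "ev z [:[:c:]:] = c"
  unfolding ev_def by (simp add: heval_const heval_rhom rhom_id)

lemma ev_const': "ev z [:q:] = poly q (fst z)"
  unfolding ev_def by (subst heval_const[OF heval_rhom[OF rhom_id]]) (simp add: heval_def)

lemma ev_mult: "ev z (p * q) = ev z p * ev z q"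
  using rhom_ev by (simp add: is_rhom_def)

lemma ev_scl: "ev z (scl c p) = c * ev z p"
proof -
  have "ev z (scl c p) = ev z ([:[:c:]:] * p)" by (simp add: scl_def)
  also have "\<dots> = ev z [:[:c:]:] * ev z p" by (rule ev_mult)
  also have "\<dots> = c * ev z p" by (simp add: ev_const)
  finally show ?thesis .
qed

lemma ev_sum: "ev z (sum f A) = (\<Sum>a\<in>A. ev z (f a))"
  using rhom_ev by (rule rhom_sum)

lemma ev_prod: "ev z (prod f A) = (\<Prod>a\<in>A. ev z (f a))"
  using rhom_ev by (rule rhom_prod)

lemma ev_t: "ev z [:[:c:], [:1:]:] = c + snd z"
  unfolding ev_def heval_def by (simp add: map_poly_pCons)

definition lin :: "complex \<times> complex \<Rightarrow> complex \<times> complex \<Rightarrow> bp" where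
  "lin z w = (if fst z \<noteq> fst w then [:[:- fst w, 1:]:] else [:[:- snd w:], [:1:]:])"

lemma ev_lin_w: "ev w (lin z w) = 0"
  by (auto simp: lin_def ev_const' ev_t)

lemma ev_lin_z: "z \<noteq> w \<Longrightarrow> ev z (lin z w) \<noteq> 0"
  by (auto simp: lin_def ev_const' ev_t prod_eq_iff)

lemma tdeg_lin: "tdeg (lin z w) \<le> 1"
  by (rule tdeg_leI) (auto simp: lin_def coeff_pCons split: if_splits nat.splits)

definition lag :: "(complex \<times> complex) set \<Rightarrow> complex \<times> complex \<Rightarrow> bp" where
  "lag Z z = (\<Prod>w\<in>Z - {z}. lin z w)"

lemma ev_lag_z: "finite Z \<Longrightarrow> ev z (lag Z z) \<noteq> 0"
proof -
  assume Z: "finite Z"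
  have "\<forall>w\<in>Z-{z}. ev z (lin z w) \<noteq> 0"
  proof
    fix w assume "w \<in> Z - {z}"
    hence "z \<noteq> w" by auto
    thus "ev z (lin z w) \<noteq> 0" by (rule ev_lin_z)
  qed
  thus ?thesis unfolding lag_def ev_prod using Z by (simp add: prod_zero_iff)
qed

lemma ev_lag_w: "finite Z \<Longrightarrow> w \<in> Z \<Longrightarrow> w \<noteq> z \<Longrightarrow> ev w (lag Z z) = 0"
proof -
  assume Z: "finite Z" and w: "w \<in> Z" "w \<noteq> z"
  have w': "w \<in> Z - {z}" using w by simp
  have e: "ev w (lin z w) = 0" by (rule ev_lin_w)
  have ex: "\<exists>a\<in>Z - {z}. ev w (lin z a) = 0" using e w' by (intro bexI[where x = w])
  show ?thesis unfolding lag_def ev_prod using Z ex by (intro prod_zero) simp_all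
qed

lemma tdeg_lag: "finite Z \<Longrightarrow> tdeg (lag Z z) \<le> card Z"
proof -
  assume "finite Z"
  have "tdeg (lag Z z) \<le> card (Z - {z})" unfolding lag_def by (rule tdeg_prod_le) (rule tdeg_lin)
  also have "\<dots> \<le> card Z" using \<open>finite Z\<close> by (simp add: card_mono)
  finally show ?thesis .
qed


lemma hB_sub_span: "(*) h ` Bk m \<subseteq> VS.span ((\<lambda>x. h * monx x) ` Idx m)"
proof
  fix p assume "p \<in> (*) h ` Bk m"
  then obtain a where a: "a \<in> Bk m" "p = h * a" by auto
  have ae: "a = (\<Sum>x\<in>Idx m. scl (coeff (coeff a (snd x)) (fst x)) (monx x))"
    using a by (intro expand_mon) (simp add: Bk_def)
  have "p = h * a" by (rule a(2))
  also have "\<dots> = h * (\<Sum>x\<in>Idx m. scl (coeff (coeff a (snd x)) (fst x)) (monx x))"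
    by (rule arg_cong[where f = "(*) h", OF ae])
  also have "\<dots> = (\<Sum>x\<in>Idx m. h * scl (coeff (coeff a (snd x)) (fst x)) (monx x))"
    by (rule sum_distrib_left)
  also have "\<dots> = (\<Sum>x\<in>Idx m. scl (coeff (coeff a (snd x)) (fst x)) (h * monx x))"
    by (simp add: scl_mult_right)
  finally have "p = (\<Sum>x\<in>Idx m. scl (coeff (coeff a (snd x)) (fst x)) (h * monx x))" .
  also have "\<dots> \<in> VS.span ((\<lambda>x. h * monx x) ` Idx m)"
    by (intro VS.span_sum VS.span_scale VS.span_base) auto
  finally show "p \<in> VS.span ((\<lambda>x. h * monx x) ` Idx m)" .
qed

lemma subspace_hB: "VS.subspace ((*) h ` Bk m)"
  unfolding VS.subspace_def
proof (intro conjI ballI allI)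
  show "0 \<in> (*) h ` Bk m" using VS.subspace_0[OF subspace_Bk] by force
  fix x y assume "x \<in> (*) h ` Bk m" "y \<in> (*) h ` Bk m"
  then obtain a b where "a \<in> Bk m" "b \<in> Bk m" "x = h * a" "y = h * b" by auto
  moreover have "a + b \<in> Bk m" using calculation VS.subspace_add[OF subspace_Bk] by blast
  ultimately have "x + y = h * (a + b)" "a + b \<in> Bk m" by (simp_all add: distrib_left)
  thus "x + y \<in> (*) h ` Bk m" by (rule image_eqI)
next
  fix c x assume "x \<in> (*) h ` Bk m"
  then obtain a where "a \<in> Bk m" "x = h * a" by auto
  moreover have "scl c a \<in> Bk m" using calculation VS.subspace_scale[OF subspace_Bk] by blast
  ultimately have "scl c x = h * scl c a" "scl c a \<in> Bk m" by (simp_all add: scl_mult_right)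
  thus "scl c x \<in> (*) h ` Bk m" by (rule image_eqI)
qed

lemma hM_sub_hB: "(\<lambda>x. h * monx x) ` Idx m \<subseteq> (*) h ` Bk m"
  using Mon_sub_Bk by (auto simp: Mon_def)

lemma hB_sub_Bk: "m + tdeg h \<le> n \<Longrightarrow> (*) h ` Bk m \<subseteq> Bk n"
proof
  fix p assume le: "m + tdeg h \<le> n" and "p \<in> (*) h ` Bk m"
  then obtain a where a: "tdeg a \<le> m" "p = h * a" by (auto simp: Bk_def)
  have "tdeg p \<le> tdeg h + tdeg a" using a(2) tdeg_mult_le by simp
  thus "p \<in> Bk n" using a le by (simp add: Bk_def)
qed

lemma inter_sub:
  assumes f: "f \<noteq> 0" and g: "g \<noteq> 0" and cop: "coprime f g"
    and le: "tdeg f + tdeg g \<le> n"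
  shows "(*) f ` Bk (n - tdeg f) \<inter> (*) g ` Bk (n - tdeg g) \<subseteq> (*) (f * g) ` Bk (n - tdeg f - tdeg g)"
proof
  fix p assume "p \<in> (*) f ` Bk (n - tdeg f) \<inter> (*) g ` Bk (n - tdeg g)"
  hence p1: "p \<in> (*) f ` Bk (n - tdeg f)" and p2: "p \<in> (*) g ` Bk (n - tdeg g)" by auto
  from p1 obtain a where a: "a \<in> Bk (n - tdeg f)" "p = f * a" by (rule imageE) simp
  from p2 obtain b where b: "p = g * b" by (rule imageE) blast
  have ab: "tdeg a \<le> n - tdeg f" "p = f * a" "p = g * b" using a b by (auto simp: Bk_def)
  have af: "a * f = g * b"
  proof -
    have "a * f = f * a" by (rule mult.commute)
    also have "\<dots> = g * b" using ab(2,3) by simp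
    finally show ?thesis .
  qed
  have "g dvd a * f" unfolding af by (rule dvd_triv_left)
  moreover have cop': "coprime g f" using cop by (simp add: coprime_commute)
  ultimately have "g dvd a" by (rule cop_dvd[rotated])
  then obtain h where h: "a = g * h" by (rule dvdE)
  show "p \<in> (*) (f * g) ` Bk (n - tdeg f - tdeg g)"
  proof (cases "h = 0")
    case True
    then have "p = (f * g) * 0" using ab h by simp
    moreover have "0 \<in> Bk (n - tdeg f - tdeg g)" by (simp add: Bk_def)
    ultimately show ?thesis by (rule image_eqI)
  next
    case False
    have "tdeg a = tdeg g + tdeg h" using h g False by (simp add: tdeg_mult)
    hence "tdeg h \<le> n - tdeg f - tdeg g" using ab(1) by linarith
    hence hB: "h \<in> Bk (n - tdeg f - tdeg g)" by (simp add: Bk_def)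
    have "p = (f * g) * h" using ab(2) h by (simp add: mult.assoc mult.commute mult.left_commute)
    thus ?thesis using hB by (rule image_eqI)
  qed
qed


lemma final_arith:
  fixes d1 d2 k :: nat
  assumes "2 * k + (d2 + k + 1) * (d2 + k + 2) + (d1 + k + 1) * (d1 + k + 2)
           \<le> (d1 + d2 + k + 1) * (d1 + d2 + k + 2) + (k + 1) * (k + 2)"
  shows "k \<le> d1 * d2"
  using assms by (simp add: algebra_simps)

lemma ev_hB: "x \<in> (*) h ` Bk m \<Longrightarrow> ev z h = 0 \<Longrightarrow> ev z x = 0"
  by (auto simp: ev_mult)

theorem bezout:
  fixes f g :: bp and Z :: "(complex \<times> complex) set"
  assumes f: "f \<noteq> 0" and g: "g \<noteq> 0" and cop: "coprime f g" and Z: "finite Z"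
    and vf: "\<forall>z\<in>Z. ev z f = 0" and vg: "\<forall>z\<in>Z. ev z g = 0"
  shows "card Z \<le> tdeg f * tdeg g"
proof -
  define d1 where "d1 = tdeg f"
  define d2 where "d2 = tdeg g"
  define k where "k = card Z"
  define n where "n = d1 + d2 + k"
  define S1 where "S1 = (*) f ` Bk (n - d1)"
  define S2 where "S2 = (*) g ` Bk (n - d2)"
  define T1 where "T1 = (\<lambda>x. f * monx x) ` Idx (n - d1)"
  define T2 where "T2 = (\<lambda>x. g * monx x) ` Idx (n - d2)"
  define T3 where "T3 = (\<lambda>x. (f * g) * monx x) ` Idx (n - d1 - d2)"
  have sS1: "VS.subspace S1" unfolding S1_def by (rule subspace_hB)
  have sS2: "VS.subspace S2" unfolding S2_def by (rule subspace_hB)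
  have S1T1: "S1 \<subseteq> VS.span T1" unfolding S1_def T1_def by (rule hB_sub_span)
  have S2T2: "S2 \<subseteq> VS.span T2" unfolding S2_def T2_def by (rule hB_sub_span)
  have T1S1: "T1 \<subseteq> S1" unfolding S1_def T1_def by (rule hM_sub_hB)
  have T2S2: "T2 \<subseteq> S2" unfolding S2_def T2_def by (rule hM_sub_hB)
  have fT1: "finite T1" "finite T2" "finite T3" unfolding T1_def T2_def T3_def by simp_all
  have iT1: "VS.independent T1" "card T1 = card (Idx (n - d1))"
    unfolding T1_def using indep_hMon[OF f] by auto
  have iT2: "VS.independent T2" "card T2 = card (Idx (n - d2))"
    unfolding T2_def using indep_hMon[OF g] by auto
  have cT3: "card T3 \<le> card (Idx (n - d1 - d2))" unfolding T3_def by (rule card_image_le) simp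
  have I3: "S1 \<inter> S2 \<subseteq> VS.span T3"
  proof -
    have "S1 \<inter> S2 \<subseteq> (*) (f * g) ` Bk (n - d1 - d2)"
      unfolding S1_def S2_def d1_def d2_def
      using inter_sub[OF f g cop, of n] by (simp add: n_def d1_def d2_def)
    also have "\<dots> \<subseteq> VS.span T3" unfolding T3_def by (rule hB_sub_span)
    finally show ?thesis .
  qed
  obtain C where C0: "{} \<subseteq> C" and C: "C \<subseteq> S1 \<inter> S2" "VS.independent C" "S1 \<inter> S2 \<subseteq> VS.span C"
    by (rule VS.maximal_independent_subset_extend[of "{}" "S1 \<inter> S2"]) (simp_all add: VS.independent_empty)
  have "C \<subseteq> VS.span T3" using C(1) I3 by (rule order_trans)
  hence "finite C \<and> card C \<le> card T3"
    by (rule VS.independent_span_bound[OF fT1(3) C(2)])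
  hence finC: "finite C" and cardC: "card C \<le> card (Idx (n - d1 - d2))" using cT3 by auto
  have CS1: "C \<subseteq> S1" and CS2: "C \<subseteq> S2" using C(1) by auto
  obtain C1 where C1: "C \<subseteq> C1" "C1 \<subseteq> S1" "VS.independent C1" "S1 \<subseteq> VS.span C1"
    by (rule VS.maximal_independent_subset_extend[OF CS1 C(2)])
  obtain C2 where C2: "C \<subseteq> C2" "C2 \<subseteq> S2" "VS.independent C2" "S2 \<subseteq> VS.span C2"
    by (rule VS.maximal_independent_subset_extend[OF CS2 C(2)])
  have "C1 \<subseteq> VS.span T1" using C1(2) S1T1 by (rule order_trans)
  hence finC1: "finite C1" using VS.independent_span_bound[OF fT1(1) C1(3)] by simp
  have "C2 \<subseteq> VS.span T2" using C2(2) S2T2 by (rule order_trans)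
  hence finC2: "finite C2" using VS.independent_span_bound[OF fT1(2) C2(3)] by simp
  have "T1 \<subseteq> VS.span C1" using T1S1 C1(4) by (rule order_trans)
  hence "card T1 \<le> card C1" using VS.independent_span_bound[OF finC1 iT1(1)] by simp
  hence cardC1: "card (Idx (n - d1)) \<le> card C1" using iT1(2) by simp
  have "T2 \<subseteq> VS.span C2" using T2S2 C2(4) by (rule order_trans)
  hence "card T2 \<le> card C2" using VS.independent_span_bound[OF finC2 iT2(1)] by simp
  hence cardC2: "card (Idx (n - d2)) \<le> card C2" using iT2(2) by simp
  have CC: "C1 \<inter> C2 \<subseteq> C"
  proof
    fix x assume x: "x \<in> C1 \<inter> C2"
    show "x \<in> C"
    proof (rule ccontr)
      assume nx: "x \<notin> C"
      have "x \<in> S1 \<inter> S2" using x C1(2) C2(2) by auto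
      hence xC: "x \<in> VS.span C" using C(3) by (rule subsetD[rotated])
      have "C \<subseteq> C1 - {x}" using C1(1) nx by auto
      hence "VS.span C \<subseteq> VS.span (C1 - {x})" by (rule VS.span_mono)
      hence "x \<in> VS.span (C1 - {x})" using xC by (rule subsetD)
      hence "VS.dependent C1" using x unfolding VS.dependent_def by auto
      thus False using C1(3) by simp
    qed
  qed
  define U where "U = C1 \<union> C2"
  have finU: "finite U" using finC1 finC2 by (simp add: U_def)
  have C2eq: "C2 = (C2 - C1) \<union> C" using CC C1(1) C2(1) by auto
  have C2disj: "(C2 - C1) \<inter> C = {}" using C1(1) by auto
  have indU: "VS.independent U"
  proof (rule VS.independent_if_scalars_zero[OF finU])
    fix a v assume sum0: "(\<Sum>x\<in>U. scl (a x) x) = 0" and v: "v \<in> U"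
    define u where "u = (\<Sum>x\<in>C2 - C1. scl (a x) x)"
    have Ueq: "U = C1 \<union> (C2 - C1)" by (auto simp: U_def)
    have "(\<Sum>x\<in>U. scl (a x) x) = (\<Sum>x\<in>C1. scl (a x) x) + u"
      unfolding Ueq u_def using finC1 finC2 by (subst sum.union_disjoint) auto
    hence su: "(\<Sum>x\<in>C1. scl (a x) x) + u = 0" using sum0 by simp
    have uS2: "u \<in> S2" unfolding u_def
      using C2(2) by (intro VS.subspace_sum[OF sS2] VS.subspace_scale[OF sS2]) auto
    have "(\<Sum>x\<in>C1. scl (a x) x) \<in> S1"
      using C1(2) by (intro VS.subspace_sum[OF sS1] VS.subspace_scale[OF sS1]) auto
    hence "- (\<Sum>x\<in>C1. scl (a x) x) \<in> S1" by (rule VS.subspace_neg[OF sS1])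
    moreover have "u = - (\<Sum>x\<in>C1. scl (a x) x)" using su by (simp add: eq_neg_iff_add_eq_0 add.commute)
    ultimately have "u \<in> S1" by simp
    with uS2 have "u \<in> S1 \<inter> S2" by simp
    hence "u \<in> VS.span C" using C(3) by (rule subsetD[rotated])
    then obtain e where e: "u = (\<Sum>x\<in>C. scl (e x) x)" using VS.span_finite[OF finC] by auto
    define b where "b x = (if x \<in> C2 - C1 then a x else - e x)" for x
    have "(\<Sum>x\<in>C2. scl (b x) x) = (\<Sum>x\<in>C2 - C1. scl (b x) x) + (\<Sum>x\<in>C. scl (b x) x)"
      apply (subst C2eq) using C2disj finC2 finC by (intro sum.union_disjoint) auto
    also have "(\<Sum>x\<in>C2 - C1. scl (b x) x) = u" unfolding u_def b_def by (intro sum.cong) auto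
    also have "(\<Sum>x\<in>C. scl (b x) x) = (\<Sum>x\<in>C. - scl (e x) x)"
      using C2disj by (intro sum.cong) (auto simp: b_def VS.scale_minus_left)
    also have "\<dots> = - u" by (simp add: e sum_negf)
    finally have b0: "(\<Sum>x\<in>C2. scl (b x) x) = 0" by simp
    have aC2: "a x = 0" if "x \<in> C2 - C1" for x
    proof -
      have "b x = 0" using VS.independentD[OF C2(3) finC2 order_refl b0] that by auto
      thus ?thesis using that by (simp add: b_def)
    qed
    have "u = 0" unfolding u_def using aC2 by (intro sum.neutral) auto
    hence s1: "(\<Sum>x\<in>C1. scl (a x) x) = 0" using su by simp
    show "a v = 0"
    proof (cases "v \<in> C1")
      case True
      then show ?thesis using VS.independentD[OF C1(3) finC1 order_refl s1] by simp
    next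
      case False
      then show ?thesis using v aC2 by (auto simp: U_def)
    qed
  qed
  have cardU: "card (Idx (n - d1)) + card (Idx (n - d2)) \<le> card U + card (Idx (n - d1 - d2))"
  proof -
    have "card U + card (C1 \<inter> C2) = card C1 + card C2"
      unfolding U_def using finC1 finC2 by (rule card_Un_Int[symmetric])
    moreover have "card (C1 \<inter> C2) \<le> card C" using CC finC by (rule card_mono[rotated])
    ultimately show ?thesis using cardC cardC1 cardC2 by linarith
  qed
  define L where "L = lag Z ` Z"
  have USS: "U \<subseteq> S1 \<union> S2" using C1(2) C2(2) by (auto simp: U_def)
  have evU: "ev z x = 0" if "z \<in> Z" "x \<in> U" for z x
  proof -
    have "x \<in> S1 \<or> x \<in> S2" using USS that by auto
    thus ?thesis using vf vg that unfolding S1_def S2_def by (auto simp: ev_mult)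
  qed
  have injL: "inj_on (lag Z) Z"
  proof (rule inj_onI)
    fix z w assume zw: "z \<in> Z" "w \<in> Z" "lag Z z = lag Z w"
    show "z = w"
    proof (rule ccontr)
      assume "z \<noteq> w"
      hence "ev z (lag Z w) = 0" using zw Z by (intro ev_lag_w) auto
      moreover have "ev z (lag Z z) \<noteq> 0" using Z by (rule ev_lag_z)
      ultimately show False using zw by simp
    qed
  qed
  have cardL: "card L = k" unfolding L_def k_def using injL by (rule card_image)
  have finL: "finite L" unfolding L_def using Z by simp
  have disj: "U \<inter> L = {}"
  proof (rule ccontr)
    assume "U \<inter> L \<noteq> {}"
    then obtain z where z: "z \<in> Z" "lag Z z \<in> U" unfolding L_def by auto
    have "ev z (lag Z z) = 0" using evU z by simp
    thus False using ev_lag_z[OF Z] by simp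
  qed
  define W where "W = U \<union> L"
  have finW: "finite W" using finU finL by (simp add: W_def)
  have indW: "VS.independent W"
  proof (rule VS.independent_if_scalars_zero[OF finW])
    fix a v assume sum0: "(\<Sum>x\<in>W. scl (a x) x) = 0" and v: "v \<in> W"
    have aL: "a (lag Z z) = 0" if z: "z \<in> Z" for z
    proof -
      have "0 = ev z (\<Sum>x\<in>W. scl (a x) x)" using sum0 rhom_ev[of z] by (simp add: is_rhom_def)
      also have "\<dots> = (\<Sum>x\<in>W. a x * ev z x)" by (simp add: ev_sum ev_scl)
      also have "\<dots> = a (lag Z z) * ev z (lag Z z) + (\<Sum>x\<in>W - {lag Z z}. a x * ev z x)"
        using finW z by (subst sum.remove[of W "lag Z z"]) (auto simp: W_def L_def)
      also have "(\<Sum>x\<in>W - {lag Z z}. a x * ev z x) = 0"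
      proof (rule sum.neutral, rule ballI)
        fix x assume x: "x \<in> W - {lag Z z}"
        show "a x * ev z x = 0"
        proof (cases "x \<in> U")
          case True
          then show ?thesis using evU z by simp
        next
          case False
          then obtain w where w: "w \<in> Z" "x = lag Z w" using x by (auto simp: W_def L_def)
          hence "w \<noteq> z" using x by auto
          hence "ev z (lag Z w) = 0" using w z Z by (intro ev_lag_w) auto
          thus ?thesis using w by simp
        qed
      qed
      finally have "a (lag Z z) * ev z (lag Z z) = 0" by simp
      thus ?thesis using ev_lag_z[OF Z] by simp
    qed
    have "(\<Sum>x\<in>W. scl (a x) x) = (\<Sum>x\<in>U. scl (a x) x) + (\<Sum>x\<in>L. scl (a x) x)"
      unfolding W_def using finU finL disj by (rule sum.union_disjoint)
    moreover have "(\<Sum>x\<in>L. scl (a x) x) = 0" using aL by (intro sum.neutral) (auto simp: L_def)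
    ultimately have sU: "(\<Sum>x\<in>U. scl (a x) x) = 0" using sum0 by simp
    show "a v = 0"
    proof (cases "v \<in> U")
      case True
      then show ?thesis using VS.independentD[OF indU finU order_refl sU] by simp
    next
      case False
      then show ?thesis using v aL by (auto simp: W_def L_def)
    qed
  qed
  have WB: "W \<subseteq> VS.span (Mon n)"
  proof -
    have "S1 \<subseteq> Bk n" unfolding S1_def by (rule hB_sub_Bk) (simp add: n_def d1_def)
    moreover have "S2 \<subseteq> Bk n" unfolding S2_def by (rule hB_sub_Bk) (simp add: n_def d2_def)
    moreover have "L \<subseteq> Bk n"
    proof
      fix x assume "x \<in> L"
      then obtain z where x: "x = lag Z z" unfolding L_def by auto
      have "tdeg x \<le> card Z" unfolding x by (rule tdeg_lag[OF Z])
      thus "x \<in> Bk n" by (simp add: Bk_def n_def k_def)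
    qed
    ultimately show ?thesis using USS unfolding W_def span_Mon by auto
  qed
  have "card W \<le> card (Mon n)"
    using VS.independent_span_bound[of "Mon n" W] indW WB by (simp add: Mon_def)
  also have "\<dots> \<le> card (Idx n)" unfolding Mon_def by (rule card_image_le) simp
  finally have cW: "card W \<le> card (Idx n)" .
  have "card W = card U + k" unfolding W_def using finU finL disj cardL by (simp add: card_Un_disjoint)
  hence main: "k + card (Idx (n - d1)) + card (Idx (n - d2)) \<le> card (Idx n) + card (Idx (n - d1 - d2))"
    using cW cardU by linarith
  have e1: "n - d1 - d2 = k" "n - d1 = d2 + k" "n - d2 = d1 + k" by (simp_all add: n_def)
  have "2 * k + 2 * card (Idx (d2 + k)) + 2 * card (Idx (d1 + k)) \<le> 2 * card (Idx n) + 2 * card (Idx k)"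
    using main unfolding e1 by simp
  hence "2 * k + (d2 + k + 1) * (d2 + k + 2) + (d1 + k + 1) * (d1 + k + 2)
           \<le> (d1 + d2 + k + 1) * (d1 + d2 + k + 2) + (k + 1) * (k + 2)"
    unfolding card_Idx n_def by simp
  hence "k \<le> d1 * d2" by (rule final_arith)
  thus ?thesis by (simp add: k_def d1_def d2_def)
qed


lemma scl_dvd: "c \<noteq> 0 \<Longrightarrow> q dvd scl c f \<Longrightarrow> q dvd f"
proof -
  assume c: "c \<noteq> 0" and d: "q dvd scl c f"
  have "q dvd scl (inverse c) (scl c f)" unfolding scl_def[of "inverse c"] using d by (rule dvd_smult)
  also have "scl (inverse c) (scl c f) = f"
    using c by (simp add: VS.scale_scale)
  finally show ?thesis .
qed

lemma scl_diff: "scl a f - scl b f = scl (a - b) f"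
  by (simp add: VS.scale_left_diff_distrib)

lemma good_combo:
  fixes fam :: "'i \<Rightarrow> bp" and P :: "bp set" and G :: "bp set"
  assumes P: "finite P" "\<And>p. p \<in> P \<Longrightarrow> \<exists>i. \<not> p dvd fam i"
    and gz: "gz \<in> G" and clos: "\<And>g i c. g \<in> G \<Longrightarrow> g + scl c (fam i) \<in> G"
  shows "\<exists>g\<in>G. \<forall>p\<in>P. \<not> p dvd g"
  using P
proof (induction P rule: finite_induct)
  case empty
  then show ?case using gz by auto
next
  case (insert p P)
  then obtain g where g: "g \<in> G" "\<forall>q\<in>P. \<not> q dvd g" by auto
  show ?case
  proof (cases "p dvd g")
    case False
    then show ?thesis using g by auto
  next
    case True
    obtain i where i: "\<not> p dvd fam i" using insert.prems by auto
    define bad where "bad q = {c. q dvd g + scl c (fam i)}" for q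
    have sub: "\<exists>c0. bad q \<subseteq> {c0}" if q: "q \<in> P" for q
    proof (cases "bad q = {}")
      case True then show ?thesis by auto
    next
      case False
      then obtain c1 where c1: "c1 \<in> bad q" by auto
      have "bad q \<subseteq> {c1}"
      proof
        fix c2 assume c2: "c2 \<in> bad q"
        show "c2 \<in> {c1}"
        proof (rule ccontr)
          assume "c2 \<notin> {c1}"
          hence ne: "c1 - c2 \<noteq> 0" by simp
          have "q dvd (g + scl c1 (fam i)) - (g + scl c2 (fam i))"
            using c1 c2 unfolding bad_def by (intro dvd_diff) simp_all
          also have "(g + scl c1 (fam i)) - (g + scl c2 (fam i)) = scl (c1 - c2) (fam i)"
            by (simp add: scl_diff[symmetric])
          finally have "q dvd fam i" using ne by (rule scl_dvd[rotated])
          hence "q dvd scl c1 (fam i)" by (simp add: scl_def dvd_smult)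
          moreover have "q dvd g + scl c1 (fam i)" using c1 by (simp add: bad_def)
          ultimately have "q dvd (g + scl c1 (fam i)) - scl c1 (fam i)" by (intro dvd_diff)
          hence "q dvd g" by simp
          thus False using g q by auto
        qed
      qed
      thus ?thesis by (rule exI)
    qed
    have finbad: "finite (bad q)" if "q \<in> P" for q
    proof -
      from sub[OF that] obtain c0 where "bad q \<subseteq> {c0}" by (elim exE)
      thus ?thesis by (rule finite_subset) simp
    qed
    have "finite (insert 0 (\<Union>q\<in>P. bad q))" using insert.hyps(1) finbad by auto
    from ex_new_if_finite[OF infinite_UNIV_char_0 this]
    obtain c where c: "c \<notin> insert 0 (\<Union>q\<in>P. bad q)" by (elim exE)
    define g' where "g' = g + scl c (fam i)"
    have "g' \<in> G" unfolding g'_def using g(1) by (rule clos)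
    moreover have "\<forall>q\<in>insert p P. \<not> q dvd g'"
    proof
      fix q assume q: "q \<in> insert p P"
      show "\<not> q dvd g'"
      proof (cases "q = p")
        case True
        show ?thesis
        proof
          assume "q dvd g'"
          hence "p dvd g'" using True by simp
          hence "p dvd g' - g" using \<open>p dvd g\<close> by (rule dvd_diff)
          hence "p dvd scl c (fam i)" by (simp add: g'_def)
          moreover have "c \<noteq> 0" using c by auto
          ultimately have "p dvd fam i" by (rule scl_dvd[rotated])
          thus False using i by simp
        qed
      next
        case False
        hence "q \<in> P" using q by simp
        thus ?thesis using c by (auto simp: g'_def bad_def)
      qed
    qed
    ultimately show ?thesis by (rule bexI[rotated])
  qed
qed

lemma unit_no_zero:
  assumes "is_unit (f :: bp)"
  shows "ev z f \<noteq> 0"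
proof
  assume "ev z f = 0"
  from assms obtain u where "1 = f * u" by (auto elim: dvdE)
  hence "ev z 1 = ev z (f * u)" by (rule arg_cong)
  hence "ev z 1 = ev z f * ev z u" by (simp only: ev_mult)
  moreover have "ev z 1 = 1" using rhom_ev[of z] by (simp add: is_rhom_def)
  ultimately show False using \<open>ev z f = 0\<close> by simp
qed

lemma coprime_pair:
  fixes fam :: "'i \<Rightarrow> bp"
  assumes nz: "fam i0 \<noteq> 0"
    and np: "\<And>p. prime p \<Longrightarrow> \<exists>i. \<not> p dvd fam i"
    and deg: "\<And>i. tdeg (fam i) \<le> d"
    and van: "\<And>i z. z \<in> Z \<Longrightarrow> ev z (fam i) = 0"
  shows "Z = {} \<or> (\<exists>f g. f \<noteq> 0 \<and> g \<noteq> 0 \<and> coprime f g \<and> tdeg f \<le> d \<and> tdeg g \<le> d \<and>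
            (\<forall>z\<in>Z. ev z f = 0) \<and> (\<forall>z\<in>Z. ev z g = 0))"
proof (cases "prime_factors (fam i0) = {}")
  case True
  hence "is_unit (fam i0)" using nz by (simp add: prime_factorization_empty_iff)
  hence nzz: "\<And>z. ev z (fam i0) \<noteq> 0" by (rule unit_no_zero)
  have "Z = {}"
  proof (rule equals0I)
    fix z assume "z \<in> Z"
    hence "ev z (fam i0) = 0" by (rule van)
    thus False using nzz[of z] by simp
  qed
  thus ?thesis by simp
next
  case False
  define f where "f = fam i0"
  define G where "G = {g. tdeg g \<le> d \<and> (\<forall>z\<in>Z. ev z g = 0)}"
  have clos: "g + scl c (fam i) \<in> G" if "g \<in> G" for g i c
  proof -
    have "tdeg (g + scl c (fam i)) \<le> d"
      using that deg[of i] tdeg_add[of g "scl c (fam i)"] tdeg_scl[of c "fam i"] by (auto simp: G_def)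
    moreover have "\<forall>z\<in>Z. ev z (g + scl c (fam i)) = 0"
      using that van rhom_ev by (auto simp: G_def is_rhom_def ev_scl)
    ultimately show ?thesis by (simp add: G_def)
  qed
  have fG: "f \<in> G" using deg van by (auto simp: G_def f_def)
  have "\<exists>g\<in>G. \<forall>p\<in>prime_factors f. \<not> p dvd g"
  proof (rule good_combo[where fam = fam and P = "prime_factors f" and G = G and gz = f])
    show "finite (prime_factors f)" by simp
    show "\<exists>i. \<not> p dvd fam i" if "p \<in> prime_factors f" for p
      using that np by (simp add: in_prime_factors_iff)
    show "f \<in> G" by (rule fG)
    show "g + scl c (fam i) \<in> G" if "g \<in> G" for g i c using that by (rule clos)
  qed
  then obtain g where g: "g \<in> G" "\<forall>p\<in>prime_factors f. \<not> p dvd g" by blast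
  from False obtain p0 where p0: "p0 \<in> prime_factors f" by (auto simp: f_def)
  have gnz: "g \<noteq> 0" using g(2) p0 by auto
  have cop: "coprime f g"
  proof (rule ccontr)
    assume nc: "\<not> coprime f g"
    have "gcd f g \<noteq> 0" using nz by (simp add: f_def)
    moreover have "\<not> is_unit (gcd f g)"
    proof
      assume "is_unit (gcd f g)"
      hence "coprime f g" by (simp only: is_unit_gcd)
      with nc show False by contradiction
    qed
    ultimately have "\<exists>b. b dvd gcd f g \<and> prime b" by (rule prime_divisor_exists)
    then obtain p where p: "p dvd gcd f g" "prime p" by (elim exE conjE)
    hence "p dvd f" "p dvd g" by auto
    hence "p \<in> prime_factors f" using p nz by (simp add: in_prime_factors_iff f_def)
    thus False using g(2) \<open>p dvd g\<close> by auto
  qed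
  show ?thesis
    using nz gnz cop g(1) fG by (auto simp: G_def f_def)
qed


type_synonym qp = "bp poly poly"

lemma UNIV_vr: "(UNIV :: vr set) = {X, Y, S, T}"
  using vr.exhaust by auto

lemma finite_vr[simp]: "finite (UNIV :: vr set)"
  by (simp add: UNIV_vr)

definition mk4 :: "nat \<Rightarrow> nat \<Rightarrow> nat \<Rightarrow> nat \<Rightarrow> vr \<Rightarrow>\<^sub>0 nat" where
  "mk4 i j a b = Poly_Mapping.single S i + Poly_Mapping.single T j + Poly_Mapping.single X a + Poly_Mapping.single Y b"

lemma lookup_mk4:
  "Poly_Mapping.lookup (mk4 i j a b) S = i" "Poly_Mapping.lookup (mk4 i j a b) T = j"
  "Poly_Mapping.lookup (mk4 i j a b) X = a" "Poly_Mapping.lookup (mk4 i j a b) Y = b"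
  by (simp_all add: mk4_def lookup_add lookup_single)

lemma mk4_iff: "m = mk4 i j a b \<longleftrightarrow> Poly_Mapping.lookup m S = i \<and> Poly_Mapping.lookup m T = j \<and> Poly_Mapping.lookup m X = a \<and> Poly_Mapping.lookup m Y = b"
proof
  assume "m = mk4 i j a b" thus "Poly_Mapping.lookup m S = i \<and> Poly_Mapping.lookup m T = j \<and> Poly_Mapping.lookup m X = a \<and> Poly_Mapping.lookup m Y = b"
    by (simp add: lookup_mk4)
next
  assume h: "Poly_Mapping.lookup m S = i \<and> Poly_Mapping.lookup m T = j \<and> Poly_Mapping.lookup m X = a \<and> Poly_Mapping.lookup m Y = b"
  show "m = mk4 i j a b"
  proof (rule poly_mapping_eqI)
    fix v show "Poly_Mapping.lookup m v = Poly_Mapping.lookup (mk4 i j a b) v"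
      using h by (cases v) (simp_all add: lookup_mk4)
  qed
qed

lemma mk4_lookup: "m = mk4 (Poly_Mapping.lookup m S) (Poly_Mapping.lookup m T) (Poly_Mapping.lookup m X) (Poly_Mapping.lookup m Y)"
  by (simp add: mk4_iff)

definition nm :: "(vr \<Rightarrow>\<^sub>0 nat) \<Rightarrow> complex \<Rightarrow> qp" where
  "nm m c = monom (monom (monom (monom c (Poly_Mapping.lookup m S)) (Poly_Mapping.lookup m T)) (Poly_Mapping.lookup m X)) (Poly_Mapping.lookup m Y)"

definition Ft :: "mpoly4 \<Rightarrow> qp" where
  "Ft F = (\<Sum>m\<in>Poly_Mapping.keys F. nm m (Poly_Mapping.lookup F m))"

definition fam :: "mpoly4 \<Rightarrow> nat \<times> nat \<Rightarrow> bp" where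
  "fam F ab = coeff (coeff (Ft F) (snd ab)) (fst ab)"

lemma coeff4_nm:
  "coeff (coeff (coeff (coeff (nm m c) b) a) j) i = (if m = mk4 i j a b then c else 0)"
  by (simp add: nm_def coeff_monom mk4_iff)

lemma coeff4_Ft:
  "coeff (coeff (coeff (coeff (Ft F) b) a) j) i = Poly_Mapping.lookup F (mk4 i j a b)"
proof -
  have "coeff (coeff (coeff (coeff (Ft F) b) a) j) i =
        (\<Sum>m\<in>Poly_Mapping.keys F. if m = mk4 i j a b then Poly_Mapping.lookup F m else 0)"
    by (simp add: Ft_def coeff_sum coeff4_nm)
  also have "\<dots> = (if mk4 i j a b \<in> Poly_Mapping.keys F then Poly_Mapping.lookup F (mk4 i j a b) else 0)"
    by (simp add: sum.delta')
  also have "\<dots> = Poly_Mapping.lookup F (mk4 i j a b)" by (simp add: in_keys_iff)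
  finally show ?thesis .
qed

lemma coeff2_fam: "coeff (coeff (fam F (a, b)) j) i = Poly_Mapping.lookup F (mk4 i j a b)"
  by (simp add: fam_def coeff4_Ft)

lemma mon_deg_mk4: "mon_deg (mk4 i j a b) = i + j + a + b"
proof -
  have "mon_deg (mk4 i j a b) = (\<Sum>v\<in>UNIV. Poly_Mapping.lookup (mk4 i j a b) v)"
    unfolding mon_deg_def by (rule sum.mono_neutral_left) (auto simp: in_keys_iff)
  also have "\<dots> = i + j + a + b" by (simp add: UNIV_vr lookup_mk4)
  finally show ?thesis .
qed

lemma mon_deg_le: "m \<in> Poly_Mapping.keys F \<Longrightarrow> mon_deg m \<le> total_degree F"
  unfolding total_degree_def by (rule Max_ge) auto

lemma tdeg_fam: "tdeg (fam F ab) \<le> total_degree F"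
proof (rule tdeg_leI)
  fix i j assume "coeff (coeff (fam F ab) j) i \<noteq> 0"
  hence "Poly_Mapping.lookup F (mk4 i j (fst ab) (snd ab)) \<noteq> 0" using coeff2_fam[of F "fst ab" "snd ab" j i] by simp
  hence "mk4 i j (fst ab) (snd ab) \<in> Poly_Mapping.keys F" by (simp add: in_keys_iff)
  hence "mon_deg (mk4 i j (fst ab) (snd ab)) \<le> total_degree F" by (rule mon_deg_le)
  thus "i + j \<le> total_degree F" by (simp add: mon_deg_mk4)
qed

definition E4 :: "complex \<Rightarrow> complex \<Rightarrow> complex \<times> complex \<Rightarrow> qp \<Rightarrow> complex" where
  "E4 x y z = heval (heval (ev z) x) y"

lemma rhom_E4: "is_rhom (E4 x y z)"
  unfolding E4_def by (intro heval_rhom rhom_ev)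

lemma E4_nm: "E4 x y (s, t) (nm m c) =
   c * s ^ Poly_Mapping.lookup m S * t ^ Poly_Mapping.lookup m T * x ^ Poly_Mapping.lookup m X * y ^ Poly_Mapping.lookup m Y"
proof -
  have r1: "is_rhom (\<lambda>c::complex. c)" by (rule rhom_id)
  have r2: "is_rhom (heval (\<lambda>c::complex. c) s)" by (rule heval_rhom[OF r1])
  have r3: "is_rhom (ev (s, t))" by (rule rhom_ev)
  have r4: "is_rhom (heval (ev (s, t)) x)" by (rule heval_rhom[OF r3])
  have e: "ev (s, t) (monom (monom c i) j) = c * s ^ i * t ^ j" for i j
    unfolding ev_def by (simp add: heval_monom[OF r2] heval_monom[OF r1])
  show ?thesis
    unfolding E4_def nm_def
    by (simp add: heval_monom[OF r4] heval_monom[OF r3] e)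
qed

lemma prod_keys_vr:
  "(\<Prod>v\<in>Poly_Mapping.keys m. (g v :: complex) ^ Poly_Mapping.lookup m v) =
   g X ^ Poly_Mapping.lookup m X * g Y ^ Poly_Mapping.lookup m Y * g S ^ Poly_Mapping.lookup m S * g T ^ Poly_Mapping.lookup m T"
proof -
  have "(\<Prod>v\<in>Poly_Mapping.keys m. g v ^ Poly_Mapping.lookup m v) = (\<Prod>v\<in>UNIV. g v ^ Poly_Mapping.lookup m v)"
    by (rule prod.mono_neutral_left) (auto simp: in_keys_iff)
  also have "\<dots> = g X ^ Poly_Mapping.lookup m X * g Y ^ Poly_Mapping.lookup m Y * g S ^ Poly_Mapping.lookup m S * g T ^ Poly_Mapping.lookup m T"
    by (simp add: UNIV_vr)
  finally show ?thesis .
qed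

lemma eval_E4: "eval F (pt x y s t) = E4 x y (s, t) (Ft F)"
proof -
  have "E4 x y (s, t) (Ft F) = (\<Sum>m\<in>Poly_Mapping.keys F. E4 x y (s, t) (nm m (Poly_Mapping.lookup F m)))"
    unfolding Ft_def by (rule rhom_sum[OF rhom_E4])
  also have "\<dots> = eval F (pt x y s t)"
    unfolding eval_def
    by (intro sum.cong refl) (simp add: E4_nm prod_keys_vr pt_def)
  finally show ?thesis by simp
qed

lemma E4_zero_iff: "(\<forall>x y. E4 x y z P = 0) \<longleftrightarrow> (\<forall>a b. ev z (coeff (coeff P b) a) = 0)"
proof -
  have r3: "is_rhom (ev z)" by (rule rhom_ev)
  have h0: "heval (ev z) x 0 = 0" for x using heval_rhom[OF r3, of x] by (simp add: is_rhom_def)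
  have e0: "ev z 0 = 0" using r3 by (simp add: is_rhom_def)
  have "(\<forall>x y. E4 x y z P = 0) \<longleftrightarrow> (\<forall>x. map_poly (heval (ev z) x) P = 0)"
    unfolding E4_def heval_def[of "heval (ev z) _"] using poly_all_0_iff_0 by blast
  also have "\<dots> \<longleftrightarrow> (\<forall>x b. heval (ev z) x (coeff P b) = 0)"
    using map_poly_zero_iff[of "heval (ev z) _", OF h0] by blast
  also have "\<dots> \<longleftrightarrow> (\<forall>b x. poly (map_poly (ev z) (coeff P b)) x = 0)"
    unfolding heval_def by blast
  also have "\<dots> \<longleftrightarrow> (\<forall>b. map_poly (ev z) (coeff P b) = 0)"
    using poly_all_0_iff_0 by blast
  also have "\<dots> \<longleftrightarrow> (\<forall>b a. ev z (coeff (coeff P b) a) = 0)"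
    using map_poly_zero_iff[of "ev z", OF e0] by blast
  finally show ?thesis by blast
qed

lemma fiber_UNIV_iff:
  "fiber_curve F q = UNIV \<longleftrightarrow> (\<forall>ab. ev q (fam F ab) = 0)"
proof -
  have "fiber_curve F q = UNIV \<longleftrightarrow> (\<forall>x y. eval F (pt x y (fst q) (snd q)) = 0)"
    unfolding fiber_curve_def by auto
  also have "\<dots> \<longleftrightarrow> (\<forall>x y. E4 x y q (Ft F) = 0)" by (simp add: eval_E4)
  also have "\<dots> \<longleftrightarrow> (\<forall>a b. ev q (fam F (a, b)) = 0)" unfolding E4_zero_iff fam_def by simp
  also have "\<dots> \<longleftrightarrow> (\<forall>ab. ev q (fam F ab) = 0)" by auto
  finally show ?thesis .
qed


lemma rhom_mult: "is_rhom h \<Longrightarrow> h (a * b) = h a * h b"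
  by (simp add: is_rhom_def)

definition Cst :: "complex \<Rightarrow> mpoly4" where "Cst c = Poly_Mapping.single 0 c"
definition Vv :: "vr \<Rightarrow> mpoly4" where "Vv v = Poly_Mapping.single (Poly_Mapping.single v 1) 1"

lemma rhom_Cst: "is_rhom Cst"
  unfolding is_rhom_def Cst_def by (simp add: single_add mult_single)

lemma Vv_pow: "Vv v ^ n = Poly_Mapping.single (Poly_Mapping.single v n) 1"
proof (induction n)
  case 0 then show ?case by simp
next
  case (Suc n)
  have "Vv v ^ Suc n = Vv v * Vv v ^ n" by simp
  also have "\<dots> = Vv v * Poly_Mapping.single (Poly_Mapping.single v n) 1" by (simp only: Suc)
  also have "\<dots> = Poly_Mapping.single (Poly_Mapping.single v 1 + Poly_Mapping.single v n) 1"
    unfolding Vv_def by (simp add: mult_single)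
  also have "Poly_Mapping.single v 1 + Poly_Mapping.single v n = Poly_Mapping.single v (Suc n)"
    by (simp add: single_add[symmetric])
  finally show ?case .
qed

definition i1 :: "complex poly \<Rightarrow> mpoly4" where "i1 = heval Cst (Vv S)"
definition i2 :: "bp \<Rightarrow> mpoly4" where "i2 = heval i1 (Vv T)"
definition i3 :: "bp poly \<Rightarrow> mpoly4" where "i3 = heval i2 (Vv X)"
definition psi :: "qp \<Rightarrow> mpoly4" where "psi = heval i3 (Vv Y)"

lemma rhom_i1: "is_rhom i1" unfolding i1_def by (intro heval_rhom rhom_Cst)
lemma rhom_i2: "is_rhom i2" unfolding i2_def by (intro heval_rhom rhom_i1)
lemma rhom_i3: "is_rhom i3" unfolding i3_def by (intro heval_rhom rhom_i2)
lemma rhom_psi: "is_rhom psi" unfolding psi_def by (intro heval_rhom rhom_i3)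

lemma i2_monom: "i2 (monom (monom c i) j) =
  Poly_Mapping.single (Poly_Mapping.single S i + Poly_Mapping.single T j) c"
proof -
  have "i2 (monom (monom c i) j) = Cst c * Vv S ^ i * Vv T ^ j"
    unfolding i2_def i1_def
    by (simp add: heval_monom[OF heval_rhom[OF rhom_Cst]] heval_monom[OF rhom_Cst])
  also have "\<dots> = Poly_Mapping.single (Poly_Mapping.single S i + Poly_Mapping.single T j) c"
    by (simp add: Vv_pow Cst_def mult_single)
  finally show ?thesis .
qed

lemma psi_nm: "psi (nm m c) = Poly_Mapping.single m c"
proof -
  have "psi (nm m c) = i2 (monom (monom c (Poly_Mapping.lookup m S)) (Poly_Mapping.lookup m T))
      * Vv X ^ Poly_Mapping.lookup m X * Vv Y ^ Poly_Mapping.lookup m Y"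
    unfolding psi_def i3_def nm_def
    by (simp add: heval_monom[OF rhom_i3[unfolded i3_def]] heval_monom[OF rhom_i2])
  also have "\<dots> = Poly_Mapping.single (mk4 (Poly_Mapping.lookup m S) (Poly_Mapping.lookup m T)
      (Poly_Mapping.lookup m X) (Poly_Mapping.lookup m Y)) c"
    by (simp add: i2_monom Vv_pow mult_single mk4_def)
  also have "\<dots> = Poly_Mapping.single m c" by (simp flip: mk4_lookup)
  finally show ?thesis .
qed

lemma sum_single_lookup: "(\<Sum>m\<in>Poly_Mapping.keys F. Poly_Mapping.single m (Poly_Mapping.lookup F m)) = (F::mpoly4)"
proof (rule poly_mapping_eqI)
  fix k
  have "Poly_Mapping.lookup (\<Sum>m\<in>Poly_Mapping.keys F. Poly_Mapping.single m (Poly_Mapping.lookup F m)) k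
      = (\<Sum>m\<in>Poly_Mapping.keys F. if m = k then Poly_Mapping.lookup F m else 0)"
    by (simp add: lookup_sum lookup_single when_def)
  also have "\<dots> = Poly_Mapping.lookup F k" by (simp add: in_keys_iff)
  finally show "Poly_Mapping.lookup (\<Sum>m\<in>Poly_Mapping.keys F. Poly_Mapping.single m (Poly_Mapping.lookup F m)) k
      = Poly_Mapping.lookup F k" .
qed

lemma psi_Ft: "psi (Ft F) = F"
  unfolding Ft_def by (simp add: rhom_sum[OF rhom_psi] psi_nm sum_single_lookup)

lemma vars_Vv: "vars (Vv v) = {v}"
  by (simp add: vars_def Vv_def)

lemma cartesian_0: "cartesian 0"
  unfolding cartesian_def
  by (rule exI[of _ "Vv X"], rule exI[of _ "Vv S"], rule exI[of _ 0], rule exI[of _ 0])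
    (simp add: vars_Vv)

lemma scl_monx: "scl c (monx x) = monom (monom c (fst x)) (snd x)"
  by (simp add: scl_def monx_def mon_def smult_monom)

definition mk2 :: "nat \<times> nat \<Rightarrow> vr \<Rightarrow>\<^sub>0 nat" where
  "mk2 x = Poly_Mapping.single S (fst x) + Poly_Mapping.single T (snd x)"

lemma mk2_inj: "mk2 x = mk2 y \<Longrightarrow> x = y"
proof -
  assume "mk2 x = mk2 y"
  hence "Poly_Mapping.lookup (mk2 x) S = Poly_Mapping.lookup (mk2 y) S"
        "Poly_Mapping.lookup (mk2 x) T = Poly_Mapping.lookup (mk2 y) T" by simp_all
  thus "x = y" by (simp add: mk2_def lookup_add lookup_single prod_eq_iff)
qed

lemma i2_expand:
  "i2 p = (\<Sum>x\<in>Idx (tdeg p). Poly_Mapping.single (mk2 x) (coeff (coeff p (snd x)) (fst x)))"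
proof -
  have "i2 p = i2 (\<Sum>x\<in>Idx (tdeg p). scl (coeff (coeff p (snd x)) (fst x)) (monx x))"
    by (subst expand_mon[of p "tdeg p", OF order_refl, symmetric]) (rule refl)
  also have "\<dots> = (\<Sum>x\<in>Idx (tdeg p). Poly_Mapping.single (mk2 x) (coeff (coeff p (snd x)) (fst x)))"
    by (simp add: rhom_sum[OF rhom_i2] scl_monx i2_monom mk2_def)
  finally show ?thesis .
qed

lemma keys_mk2: "Poly_Mapping.keys (mk2 x) \<subseteq> {S, T}"
proof -
  have "Poly_Mapping.keys (mk2 x) \<subseteq> Poly_Mapping.keys (Poly_Mapping.single S (fst x)) \<union> Poly_Mapping.keys (Poly_Mapping.single T (snd x))"
    unfolding mk2_def by (rule keys_add)
  also have "\<dots> \<subseteq> {S, T}" by auto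
  finally show ?thesis .
qed

lemma vars_i2_sub: "vars (i2 p) \<subseteq> {S, T}"
proof
  fix v assume "v \<in> vars (i2 p)"
  then obtain m where m: "m \<in> Poly_Mapping.keys (i2 p)" "v \<in> Poly_Mapping.keys m" by (auto simp: vars_def)
  have "m \<in> (\<Union>x\<in>Idx (tdeg p). Poly_Mapping.keys (Poly_Mapping.single (mk2 x) (coeff (coeff p (snd x)) (fst x))))"
    using keys_sum m(1)[unfolded i2_expand[of p]] by (rule subsetD)
  then obtain x where "m \<in> Poly_Mapping.keys (Poly_Mapping.single (mk2 x) (coeff (coeff p (snd x)) (fst x)))"
    by (rule UN_E)
  hence "m = mk2 x" by (simp split: if_splits)
  hence "Poly_Mapping.keys m \<subseteq> {S, T}" using keys_mk2 by simp
  thus "v \<in> {S, T}" using m(2) by (rule subsetD)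
qed

lemma lookup_i2: "Poly_Mapping.lookup (i2 p) (mk2 y) = coeff (coeff p (snd y)) (fst y)"
proof -
  have "Poly_Mapping.lookup (i2 p) (mk2 y) =
        (\<Sum>x\<in>Idx (tdeg p). if x = y then coeff (coeff p (snd x)) (fst x) else 0)"
    unfolding i2_expand[of p] lookup_sum
    by (intro sum.cong refl) (auto simp: lookup_single when_def dest: mk2_inj)
  also have "\<dots> = (if y \<in> Idx (tdeg p) then coeff (coeff p (snd y)) (fst y) else 0)"
    by simp
  also have "\<dots> = coeff (coeff p (snd y)) (fst y)"
    using tdeg_ge[of p "snd y" "fst y"] by (auto simp: Idx_def)
  finally show ?thesis .
qed

lemma nonconst_coeff:
  assumes "prime (p :: bp)"
  shows "\<exists>i j. (i, j) \<noteq> (0, 0) \<and> coeff (coeff p j) i \<noteq> 0"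
proof (rule ccontr)
  assume "\<not> ?thesis"
  hence h: "\<And>i j. (i, j) \<noteq> (0, 0) \<Longrightarrow> coeff (coeff p j) i = 0" by blast
  define c where "c = coeff (coeff p 0) 0"
  have "p = [:[:c:]:]"
  proof (rule poly_eqI, rule poly_eqI)
    fix j i show "coeff (coeff p j) i = coeff (coeff [:[:c:]:] j) i"
      using h[of i j] by (cases i; cases j) (auto simp: c_def)
  qed
  moreover have "p \<noteq> 0" using assms by auto
  ultimately have "c \<noteq> 0" by auto
  hence "1 = c * inverse c" by simp
  hence "c dvd 1" by (rule dvdI)
  hence "is_unit [:[:c:]:]" by (simp add: is_unit_const_poly_iff)
  with \<open>p = [:[:c:]:]\<close> assms show False by (simp add: not_prime_unit)
qed

lemma vars_i2_ne: "prime p \<Longrightarrow> vars (i2 p) \<noteq> {}"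
proof -
  assume "prime p"
  then obtain i j where ij: "(i, j) \<noteq> (0, 0)" "coeff (coeff p j) i \<noteq> 0" using nonconst_coeff by blast
  have "Poly_Mapping.lookup (i2 p) (mk2 (i, j)) \<noteq> 0" using ij by (simp add: lookup_i2)
  hence k: "mk2 (i, j) \<in> Poly_Mapping.keys (i2 p)" by (simp add: in_keys_iff)
  have "S \<in> Poly_Mapping.keys (mk2 (i, j)) \<or> T \<in> Poly_Mapping.keys (mk2 (i, j))"
    using ij(1) by (auto simp: in_keys_iff mk2_def lookup_add lookup_single)
  thus ?thesis using k by (auto simp: vars_def)
qed

lemma cart_of_prime:
  assumes p: "prime p" and dv: "\<And>ab. p dvd fam F ab"
  shows "cartesian F"
proof -
  define L where "L = map_poly (map_poly (\<lambda>r. r div p)) (Ft F)"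
  have eq: "Ft F = [:[:p:]:] * L"
  proof (rule poly_eqI, rule poly_eqI)
    fix b a
    have d: "p dvd coeff (coeff (Ft F) b) a" using dv[of "(a, b)"] by (simp add: fam_def)
    have "coeff (coeff ([:[:p:]:] * L) b) a = p * (coeff (coeff (Ft F) b) a div p)"
      by (simp add: L_def coeff_map_poly)
    also have "\<dots> = coeff (coeff (Ft F) b) a" using d by simp
    finally show "coeff (coeff (Ft F) b) a = coeff (coeff ([:[:p:]:] * L) b) a" by simp
  qed
  have "F = psi ([:[:p:]:] * L)" using psi_Ft[of F, unfolded eq, symmetric] .
  also have "\<dots> = psi [:[:p:]:] * psi L" by (rule rhom_mult[OF rhom_psi])
  also have "psi [:[:p:]:] = i2 p"
  proof -
    have "psi [:[:p:]:] = i3 [:p:]" unfolding psi_def by (rule heval_const[OF rhom_i3])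
    also have "i3 [:p:] = i2 p" unfolding i3_def by (rule heval_const[OF rhom_i2])
    finally show ?thesis .
  qed
  finally have F: "F = Vv X * 0 + i2 p * psi L" by simp
  show ?thesis unfolding cartesian_def
    by (rule exI[of _ "Vv X"], rule exI[of _ "i2 p"], rule exI[of _ 0], rule exI[of _ "psi L"])
      (use F vars_i2_sub vars_i2_ne[OF p] in \<open>simp add: vars_Vv\<close>)
qed


theorem lemma2p4:
  fixes F :: mpoly4 and d :: nat
  assumes "total_degree F = d"
    and "\<not> cartesian F"
  shows "finite {q. fiber_curve F q = UNIV} \<and> card {q. fiber_curve F q = UNIV} \<le> d ^ 2"
proof -
  define Q where "Q = {q. fiber_curve F q = UNIV}"
  have Qiff: "q \<in> Q \<longleftrightarrow> (\<forall>ab. ev q (fam F ab) = 0)" for q by (simp add: Q_def fiber_UNIV_iff)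
  have Fnz: "F \<noteq> 0" using assms(2) cartesian_0 by auto
  have "Ft F \<noteq> 0"
  proof
    assume "Ft F = 0"
    hence "F = psi 0" using psi_Ft[of F] by simp
    also have "psi 0 = 0" using rhom_psi by (simp add: is_rhom_def)
    finally show False using Fnz by simp
  qed
  then obtain b where b: "coeff (Ft F) b \<noteq> 0" by (auto simp: poly_eq_iff)
  then obtain a where a: "coeff (coeff (Ft F) b) a \<noteq> 0" by (auto simp: poly_eq_iff)
  have nz: "fam F (a, b) \<noteq> 0" using a by (simp add: fam_def)
  have np: "\<exists>ab. \<not> p dvd fam F ab" if p: "prime p" for p
  proof (rule ccontr)
    assume nex: "\<not> (\<exists>ab. \<not> p dvd fam F ab)"
    have "p dvd fam F ab" for ab
    proof (rule ccontr)
      assume "\<not> p dvd fam F ab"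
      hence "\<exists>ab. \<not> p dvd fam F ab" by (rule exI)
      with nex show False by contradiction
    qed
    hence "cartesian F" by (rule cart_of_prime[OF p])
    thus False using assms(2) by contradiction
  qed
  have deg: "tdeg (fam F ab) \<le> d" for ab using tdeg_fam[of F ab] assms(1) by simp
  have bound: "card Z \<le> d ^ 2" if Z: "finite Z" "Z \<subseteq> Q" for Z
  proof -
    have van: "ev z (fam F ab) = 0" if "z \<in> Z" for ab z
    proof -
      have "z \<in> Q" using that Z(2) by (rule subsetD[rotated])
      hence "\<forall>ab. ev z (fam F ab) = 0" using Qiff[of z] by (rule iffD1[rotated])
      thus ?thesis by (rule spec)
    qed
    have "Z = {} \<or> (\<exists>f g. f \<noteq> 0 \<and> g \<noteq> 0 \<and> coprime f g \<and> tdeg f \<le> d \<and> tdeg g \<le> d \<and>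
            (\<forall>z\<in>Z. ev z f = 0) \<and> (\<forall>z\<in>Z. ev z g = 0))"
      by (rule coprime_pair[of "fam F" "(a, b)" d Z, OF nz np deg van])
    thus ?thesis
    proof
      assume "Z = {}" thus ?thesis by simp
    next
      assume "\<exists>f g. f \<noteq> 0 \<and> g \<noteq> 0 \<and> coprime f g \<and> tdeg f \<le> d \<and> tdeg g \<le> d \<and>
            (\<forall>z\<in>Z. ev z f = 0) \<and> (\<forall>z\<in>Z. ev z g = 0)"
      then obtain f g where fg: "f \<noteq> 0" "g \<noteq> 0" "coprime f g" "tdeg f \<le> d" "tdeg g \<le> d"
        "\<forall>z\<in>Z. ev z f = 0" "\<forall>z\<in>Z. ev z g = 0" by blast
      have "card Z \<le> tdeg f * tdeg g" by (rule bezout[OF fg(1,2,3) Z(1) fg(6,7)])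
      also have "\<dots> \<le> d * d" using fg(4,5) by (rule mult_le_mono)
      finally show ?thesis by (simp add: power2_eq_square)
    qed
  qed
  have fin: "finite Q"
  proof (rule ccontr)
    assume "infinite Q"
    then obtain Z where Z: "Z \<subseteq> Q" "finite Z" "card Z = d ^ 2 + 1"
      using infinite_arbitrarily_large by blast
    have "card Z \<le> d ^ 2" using bound[OF Z(2,1)] .
    thus False using Z(3) by simp
  qed
  show ?thesis using fin bound[OF fin order_refl] by (simp add: Q_def)
qed


end
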